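(* For a finite word $\pi$ of distinct positive integers, let $\Psi(\pi)$ be the increasing binary tree defined recursively by: $\Psi(\emptyset)=\emptyset$; otherwise write $\pi=\sigma\,i\,\tau$ with $i$ the least letter of $\pi$, and let $\Psi(\pi)$ have root $i$ with left subtree $\Psi(\sigma)$ and right subtree $\Psi(\tau)$. Then $\Psi$ restricts to a bijection from the set $\mathrm{And}^I_n$ of André I permutations of $[n]$ onto the set $\mathcal{T}^I_n$ of André I trees on $[n]$, and to a bijection from the set $\mathrm{And}^{II}_n$ of André II permutations of $[n]$ onto the set $\mathcal{T}^{II}_n$ of André II trees on $[n]$. Moreover, for every such $\pi$ with $T=\Psi(\pi)$, $l(T)=\operatorname{des}(\pi)$ and $\operatorname{inv}(T)=\operatorname{inv}(\pi)$.
   Context: $[n]=\{1,\dots,n\}$. André permutations: the empty word and every single-letter word are both André I and André II permutations. A word $\sigma$ of $m\ge2$ distinct integers, written $\sigma=\tau\,\min(\sigma)\,\tau'$, is an André I permutation if $\tau$ and $\tau'$ are André I permutations and the maximum letter of $\tau\tau'$ lies in $\tau'$; it is an André II permutation if $\tau,\tau'$ are André II permutations and the minimum letter of $\tau\tau'$ lies in $\tau'$. For a permutation $\pi=\pi_1\cdots\pi_n$ with convention $\pi_0=\pi_{n+1}=0$, $\operatorname{des}(\pi)=\#\{0\le i\le n:\pi_i>\pi_{i+1}\}$ and $\operatorname{inv}(\pi)=\#\{(i,j):i<j,\ \pi_i>\pi_j\}$. An increasing binary tree on $[n]$ is a rooted tree on vertex set $[n]$, labels increasing along paths from the root, each vertex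 having at most a left child and at most a right child (distinguished). An André I tree is an increasing binary tree in which, for every vertex, the maximum label of its left subtree is smaller than that of its right subtree, whenever at least one is nonempty, with the maximum of an empty tree taken to be $0$. An André II tree is an increasing binary tree in which, for every vertex with at least one child, the minimum label of its left subtree is larger than that of its right subtree, the minimum of an empty tree taken to be $+\infty$. $l(T)$ is the number of leaves of $T$. An inversion of an increasing binary tree $T$ is a pair of vertices $(i,j)$ with $i>j$ such that either (1) $j$ lies to the right of the path from the root to $i$, i.e. $j$ belongs to the right subtree of some vertex $v$ of this path whose left child lies on the path; or (2) $j$ lies on the path from the root to $i$ and the left child of $j$ lies on this path. $\operatorname{inv}(T)$ is the number of inversions. *)

theory Defs
  imports Main "HOL-Library.Tree" "HOL-Library.Extended_Nat"
begin

inductive andreI :: "nat list \<Rightarrow> bool" where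
  andreI_Nil: "andreI []"
| andreI_single: "andreI [x]"
| andreI_split: "\<lbrakk> andreI \<tau>; andreI \<tau>'; distinct (\<tau> @ m # \<tau>'); \<tau> @ \<tau>' \<noteq> [];
                   \<forall>x\<in>set (\<tau> @ \<tau>'). m < x; Max (set (\<tau> @ \<tau>')) \<in> set \<tau>' \<rbrakk>
                 \<Longrightarrow> andreI (\<tau> @ m # \<tau>')"

inductive andreII :: "nat list \<Rightarrow> bool" where
  andreII_Nil: "andreII []"
| andreII_single: "andreII [x]"
| andreII_split: "\<lbrakk> andreII \<tau>; andreII \<tau>'; distinct (\<tau> @ m # \<tau>'); \<tau> @ \<tau>' \<noteq> [];
                   \<forall>x\<in>set (\<tau> @ \<tau>'). m < x; Min (set (\<tau> @ \<tau>')) \<in> set \<tau>' \<rbrakk>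
                 \<Longrightarrow> andreII (\<tau> @ m # \<tau>')"

definition perms :: "nat \<Rightarrow> nat list set" where
  "perms n = {w. distinct w \<and> set w = {1..n}}"

text \<open>Letter pi_i with the convention pi_0 = pi_(n+1) = 0 (1-based indexing).\<close>
definition ext_letter :: "nat list \<Rightarrow> nat \<Rightarrow> nat" where
  "ext_letter w i = (if 1 \<le> i \<and> i \<le> length w then w ! (i - 1) else 0)"

definition des :: "nat list \<Rightarrow> nat" where
  "des w = card {i. i \<le> length w \<and> ext_letter w i > ext_letter w (i + 1)}"

definition inv_word :: "nat list \<Rightarrow> nat" where
  "inv_word w = card {(i, j). i < j \<and> j < length w \<and> w ! i > w ! j}"

lemma takeWhile_length_less: "m \<in> set w \<Longrightarrow> length (takeWhile (\<lambda>x. x \<noteq> m) w) < length w"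
  by (induction w) auto

function psi :: "nat list \<Rightarrow> nat tree" where
  "psi [] = Leaf"
| "w \<noteq> [] \<Longrightarrow> psi w =
     (let m = Min (set w) in
      Node (psi (takeWhile (\<lambda>x. x \<noteq> m) w)) m (psi (tl (dropWhile (\<lambda>x. x \<noteq> m) w))))"
  by auto
termination
proof (relation "measure length")
  fix w :: "nat list" and m
  assume "w \<noteq> []" "m = Min (set w)"
  hence mem: "m \<in> set w" by simp
  show "(takeWhile (\<lambda>x. x \<noteq> m) w, w) \<in> measure length"
    using mem by (simp add: takeWhile_length_less)
  show "(tl (dropWhile (\<lambda>x. x \<noteq> m) w), w) \<in> measure length"
    using \<open>w \<noteq> []\<close> length_dropWhile_le[of "\<lambda>x. x \<noteq> m" w] by (cases w) auto
qed auto

fun inc_tree :: "nat tree \<Rightarrow> bool" where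
  "inc_tree Leaf = True"
| "inc_tree (Node l a r) = (inc_tree l \<and> inc_tree r \<and> (\<forall>x\<in>set_tree l \<union> set_tree r. a < x))"

definition tree_on :: "nat \<Rightarrow> nat tree \<Rightarrow> bool" where
  "tree_on n t = (inc_tree t \<and> size t = n \<and> set_tree t = {1..n})"

definition tmax :: "nat tree \<Rightarrow> nat" where
  "tmax t = (if t = Leaf then 0 else Max (set_tree t))"

definition tmin :: "nat tree \<Rightarrow> enat" where
  "tmin t = (if t = Leaf then \<infinity> else enat (Min (set_tree t)))"

fun andreI_tree :: "nat tree \<Rightarrow> bool" where
  "andreI_tree Leaf = True"
| "andreI_tree (Node l a r) = (andreI_tree l \<and> andreI_tree r \<and>
      ((l \<noteq> Leaf \<or> r \<noteq> Leaf) \<longrightarrow> tmax l < tmax r))"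

fun andreII_tree :: "nat tree \<Rightarrow> bool" where
  "andreII_tree Leaf = True"
| "andreII_tree (Node l a r) = (andreII_tree l \<and> andreII_tree r \<and>
      ((l \<noteq> Leaf \<or> r \<noteq> Leaf) \<longrightarrow> tmin l > tmin r))"

fun leaves :: "nat tree \<Rightarrow> nat" where
  "leaves Leaf = 0"
| "leaves (Node Leaf a Leaf) = 1"
| "leaves (Node l a r) = leaves l + leaves r"

fun node_at :: "'a tree \<Rightarrow> bool list \<Rightarrow> 'a option" where
  "node_at Leaf p = None"
| "node_at (Node l a r) [] = Some a"
| "node_at (Node l a r) (False # p) = node_at l p"
| "node_at (Node l a r) (True # p) = node_at r p"

text \<open>Inversions (i,j), i > j: writing the root-to-i position as p @ False # q
  (a vertex v at position p on the path whose left child is on the path), either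
  j lies in the right subtree of v (position p @ True # q'), or j = v.\<close>
definition inv_tree :: "nat tree \<Rightarrow> nat" where
  "inv_tree t = card {(i, j). j < i \<and> (\<exists>p q q'. node_at t (p @ False # q) = Some i \<and>
       (node_at t (p @ True # q') = Some j \<or> node_at t p = Some j))}"

end

theory Submission
  imports Defs
begin


lemma psi_split:
  assumes "distinct (a @ m # b)" "\<forall>x\<in>set (a @ b). m < x"
  shows "psi (a @ m # b) = Node (psi a) m (psi b)"
proof -
  have "Min (set (a @ m # b)) = m"
    using assms(2) by (intro Min_eqI) (auto intro: less_imp_le)
  moreover have "takeWhile (\<lambda>x. x \<noteq> m) (a @ m # b) = a"
    using assms(1) by (subst takeWhile_append2) auto
  moreover have "dropWhile (\<lambda>x. x \<noteq> m) (a @ m # b) = m # b"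
    using assms(1) by (subst dropWhile_append2) auto
  ultimately show ?thesis by (simp add: Let_def)
qed

lemma decomp:
  assumes "distinct (w::nat list)" "w \<noteq> []"
  shows "\<exists>a m b. w = a @ m # b \<and> (\<forall>x\<in>set (a @ b). m < x)"
proof -
  define m where "m = Min (set w)"
  have "m \<in> set w" using assms by (simp add: m_def)
  then obtain a b where w: "w = a @ m # b" by (meson split_list)
  have "\<forall>x\<in>set (a @ b). m < x"
  proof
    fix x assume x: "x \<in> set (a @ b)"
    have "x \<in> set w" using x w by auto
    hence "m \<le> x" by (simp add: m_def)
    moreover have "x \<noteq> m" using x assms(1) w by auto
    ultimately show "m < x" by simp
  qed
  thus ?thesis using w by blast
qed

lemma psi_props:
  "distinct w \<Longrightarrow> inorder (psi w) = w \<and> inc_tree (psi w)"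
proof (induction "length w" arbitrary: w rule: less_induct)
  case less
  show ?case
  proof (cases "w = []")
    case True thus ?thesis by simp
  next
    case False
    then obtain a m b where w: "w = a @ m # b" and mm: "\<forall>x\<in>set (a @ b). m < x"
      using decomp less.prems by blast
    have p: "psi w = Node (psi a) m (psi b)" using psi_split less.prems w mm by simp
    have A: "inorder (psi a) = a \<and> inc_tree (psi a)"
      using less w by auto
    have B: "inorder (psi b) = b \<and> inc_tree (psi b)"
      using less w by auto
    have sa: "set_tree (psi a) = set a" using A by (metis set_inorder)
    have sb: "set_tree (psi b) = set b" using B by (metis set_inorder)
    show ?thesis using p A B sa sb mm w by auto
  qed
qed

lemma psi_inorder:
  "inc_tree t \<Longrightarrow> distinct (inorder t) \<Longrightarrow> psi (inorder t) = t"
proof (induction t)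
  case Leaf thus ?case by simp
next
  case (Node l a r)
  have "psi (inorder l @ a # inorder r) = Node (psi (inorder l)) a (psi (inorder r))"
    using Node.prems by (intro psi_split) auto
  thus ?case using Node by auto
qed

lemma psi_Leaf: "psi w = Leaf \<longleftrightarrow> w = []"
  by (cases "w = []") (auto simp: Let_def)

lemma andreI_tree_psi: "andreI w \<Longrightarrow> andreI_tree (psi w)"
proof (induction rule: andreI.induct)
  case andreI_Nil thus ?case by simp
next
  case (andreI_single x) thus ?case by (simp add: Let_def)
next
  case (andreI_split a b m)
  have p: "psi (a @ m # b) = Node (psi a) m (psi b)" using andreI_split by (intro psi_split) auto
  have sa: "set_tree (psi a) = set a" using psi_props[of a] andreI_split.hyps(3) by (metis distinct_append set_inorder)
  have sb: "set_tree (psi b) = set b" using psi_props[of b] andreI_split.hyps(3) by (metis distinct_append distinct.simps(2) set_inorder)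
  have bne: "b \<noteq> []" using andreI_split.hyps(6) by auto
  have bne': "psi b \<noteq> Leaf" using bne by (metis psi_Leaf)
  have "tmax (psi a) < tmax (psi b)"
  proof (cases "a = []")
    case True
    have "Max (set b) \<in> set b" using bne by simp
    hence "Max (set b) > m" using andreI_split.hyps(5) by auto
    thus ?thesis using True bne' sb by (simp add: tmax_def del: psi.simps(2))
  next
    case False
    have "Max (set a) \<in> set a" using False by simp
    moreover have "Max (set a) \<le> Max (set (a @ b))" using False by (simp add: Max_mono)
    moreover have "Max (set (a @ b)) \<in> set b" using andreI_split.hyps(6) .
    moreover have "distinct (a @ b)" using andreI_split.hyps(3) by auto
    ultimately have "Max (set a) < Max (set (a @ b))"
      by (metis disjoint_iff distinct_append order_le_imp_less_or_eq)
    moreover have "Max (set (a @ b)) = Max (set b)"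
      using andreI_split.hyps(6) bne by (metis List.finite_set Max_ge Max_in Un_upper2 antisym set_append set_empty Max_mono)
    ultimately show ?thesis using False bne' sa sb by (simp add: tmax_def psi_Leaf del: psi.simps(2))
  qed
  thus ?case using p andreI_split bne by (simp add: psi_Leaf)
qed

lemma andreII_tree_psi: "andreII w \<Longrightarrow> andreII_tree (psi w)"
proof (induction rule: andreII.induct)
  case andreII_Nil thus ?case by simp
next
  case (andreII_single x) thus ?case by (simp add: Let_def)
next
  case (andreII_split a b m)
  have p: "psi (a @ m # b) = Node (psi a) m (psi b)" using andreII_split by (intro psi_split) auto
  have sa: "set_tree (psi a) = set a" using psi_props[of a] andreII_split.hyps(3) by (metis distinct_append set_inorder)
  have sb: "set_tree (psi b) = set b" using psi_props[of b] andreII_split.hyps(3) by (metis distinct_append distinct.simps(2) set_inorder)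
  have bne: "b \<noteq> []" using andreII_split.hyps(6) by auto
  have bne': "psi b \<noteq> Leaf" using bne by (metis psi_Leaf)
  have "tmin (psi a) > tmin (psi b)"
  proof (cases "a = []")
    case True
    thus ?thesis using True bne' sb by (simp add: tmin_def del: psi.simps(2))
  next
    case False
    have "Min (set a) \<in> set a" using False by simp
    moreover have "Min (set (a @ b)) \<le> Min (set a)" using False by (simp add: Min_antimono)
    moreover have "Min (set (a @ b)) \<in> set b" using andreII_split.hyps(6) .
    moreover have "distinct (a @ b)" using andreII_split.hyps(3) by auto
    ultimately have "Min (set (a @ b)) < Min (set a)"
      by (metis disjoint_iff distinct_append order_le_imp_less_or_eq)
    moreover have "Min (set (a @ b)) = Min (set b)"
      using andreII_split.hyps(6) bne by (metis List.finite_set Min_le Min_in Un_upper2 antisym set_append set_empty Min_antimono)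
    ultimately show ?thesis using False bne' sa sb by (simp add: tmin_def psi_Leaf del: psi.simps(2))
  qed
  thus ?case using p andreII_split bne by (simp add: psi_Leaf)
qed

lemma andreI_inorder:
  "inc_tree t \<Longrightarrow> distinct (inorder t) \<Longrightarrow> andreI_tree t \<Longrightarrow> andreI (inorder t)"
proof (induction t)
  case Leaf thus ?case by (simp add: andreI_Nil)
next
  case (Node l a r)
  show ?case
  proof (cases "l = Leaf \<and> r = Leaf")
    case True thus ?thesis by (simp add: andreI_single)
  next
    case False
    have lt: "tmax l < tmax r" using Node.prems False by simp
    hence rne: "r \<noteq> Leaf" by (auto simp: tmax_def)
    have "Max (set (inorder l @ inorder r)) \<in> set (inorder r)"
    proof (cases "l = Leaf")
      case True thus ?thesis using rne by simp
    next
      case False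
      have "Max (set_tree l) < Max (set_tree r)" using lt False rne by (simp add: tmax_def)
      hence "Max (set_tree l \<union> set_tree r) = Max (set_tree r)"
        using False rne by (simp add: Max_Un)
      thus ?thesis using rne by simp
    qed
    moreover have "\<forall>x\<in>set (inorder l @ inorder r). a < x" using Node.prems by auto
    moreover have "inorder l @ inorder r \<noteq> []" using rne by simp
    ultimately show ?thesis using Node
      by (auto intro!: andreI_split)
  qed
qed

lemma andreII_inorder:
  "inc_tree t \<Longrightarrow> distinct (inorder t) \<Longrightarrow> andreII_tree t \<Longrightarrow> andreII (inorder t)"
proof (induction t)
  case Leaf thus ?case by (simp add: andreII_Nil)
next
  case (Node l a r)
  show ?case
  proof (cases "l = Leaf \<and> r = Leaf")
    case True thus ?thesis by (simp add: andreII_single)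
  next
    case False
    have lt: "tmin l > tmin r" using Node.prems False by simp
    hence rne: "r \<noteq> Leaf" by (auto simp: tmin_def)
    have "Min (set (inorder l @ inorder r)) \<in> set (inorder r)"
    proof (cases "l = Leaf")
      case True thus ?thesis using rne by simp
    next
      case False
      have "Min (set_tree l) > Min (set_tree r)" using lt False rne by (simp add: tmin_def)
      hence "Min (set_tree l \<union> set_tree r) = Min (set_tree r)"
        using False rne by (simp add: Min_Un)
      thus ?thesis using rne by simp
    qed
    moreover have "\<forall>x\<in>set (inorder l @ inorder r). a < x" using Node.prems by auto
    moreover have "inorder l @ inorder r \<noteq> []" using rne by simp
    ultimately show ?thesis using Node
      by (auto intro!: andreII_split)
  qed
qed



fun dl :: "nat list \<Rightarrow> nat" where
  "dl (a # b # xs) = (if b < a then 1 else 0) + dl (b # xs)"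
| "dl _ = 0"

lemma dl_append: "dl (xs @ x # ys) = dl (xs @ [x]) + dl (x # ys)"
proof (induction xs)
  case Nil thus ?case by simp
next
  case (Cons a xs) thus ?case by (cases xs) auto
qed

lemma Collect_nat_split: "{i::nat. P i} = {i. i = 0 \<and> P 0} \<union> Suc ` {i. P (Suc i)}"
proof (intro set_eqI iffI)
  fix x assume "x \<in> {i. P i}"
  thus "x \<in> {i. i = 0 \<and> P 0} \<union> Suc ` {i. P (Suc i)}" by (cases x) auto
qed auto

lemma dl_card: "dl xs = card {i. Suc i < length xs \<and> xs ! Suc i < xs ! i}"
proof (induction xs rule: dl.induct)
  case (1 a b xs)
  let ?S = "{i. Suc i < length (b # xs) \<and> (b # xs) ! Suc i < (b # xs) ! i}"
  have e: "{i. Suc i < length (a # b # xs) \<and> (a # b # xs) ! Suc i < (a # b # xs) ! i}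
     = {i. i = 0 \<and> b < a} \<union> Suc ` ?S"
    by (subst Collect_nat_split) simp
  have fin: "finite ?S" by (rule finite_subset[of _ "{..<length (b#xs)}"]) auto
  have "card ({i. i = 0 \<and> b < a} \<union> Suc ` ?S) = card {i::nat. i = 0 \<and> b < a} + card (Suc ` ?S)"
    using fin by (intro card_Un_disjoint) auto
  also have "card (Suc ` ?S) = card ?S" by (simp add: card_image)
  also have "card {i. i = (0::nat) \<and> b < a} = (if b < a then 1 else 0)" by auto
  finally show ?case using 1 e by simp
next
  case ("2_1") thus ?case by simp
next
  case ("2_2" v) thus ?case by simp
qed

lemma des_dl: "des w = dl (0 # w @ [0])"
proof -
  have ext: "ext_letter w i = (0 # w @ [0]) ! i" if "i \<le> Suc (length w)" for i
  proof (cases i)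
    case 0 thus ?thesis by (simp add: ext_letter_def)
  next
    case (Suc k)
    thus ?thesis using that by (auto simp: ext_letter_def nth_append)
  qed
  have "{i. i \<le> length w \<and> ext_letter w (i + 1) < ext_letter w i} =
        {i. Suc i < length (0 # w @ [0]) \<and> (0 # w @ [0]) ! Suc i < (0 # w @ [0]) ! i}"
    using ext by (auto simp del: nth_Cons_Suc)
  thus ?thesis by (simp add: des_def dl_card)
qed

lemma leaves_Node: "leaves (Node l a r) = (if l = Leaf \<and> r = Leaf then 1 else leaves l + leaves r)"
  by (cases l; cases r) auto

fun rne :: "nat tree \<Rightarrow> bool" where
  "rne Leaf = True"
| "rne (Node l a r) = (rne l \<and> rne r \<and> (l \<noteq> Leaf \<longrightarrow> r \<noteq> Leaf))"

lemma rneI: "andreI_tree t \<Longrightarrow> rne t"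
  by (induction t) (auto simp: tmax_def)

lemma rneII: "andreII_tree t \<Longrightarrow> rne t"
  by (induction t) (auto simp: tmin_def)

lemma dl_snoc2: "dl (ys @ [y, x]) = dl (ys @ [y]) + (if x < y then 1 else 0)"
  using dl_append[of ys y "[x]"] by simp

lemma leaves_dl:
  "inc_tree t \<Longrightarrow> rne t \<Longrightarrow> (\<forall>x\<in>set_tree t. 0 < x) \<Longrightarrow> leaves t = dl (0 # inorder t @ [0])"
proof (induction t)
  case Leaf thus ?case by simp
next
  case (Node l a r)
  show ?case
  proof (cases "l = Leaf \<and> r = Leaf")
    case True thus ?thesis using Node.prems by simp
  next
    case False
    hence rn: "r \<noteq> Leaf" using Node.prems by auto
    then obtain c R where R: "inorder r = c # R" by (cases "inorder r") auto
    have ac: "a < c" using Node.prems R by (metis inc_tree.simps(2) UnCI list.set_intros(1) set_inorder)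
    have IHl: "leaves l = dl (0 # inorder l @ [0])" using Node by auto
    have IHr: "leaves r = dl (0 # inorder r @ [0])" using Node by auto
    have "dl (0 # inorder (Node l a r) @ [0]) = dl ((0 # inorder l) @ a # (inorder r @ [0]))" by simp
    also have "\<dots> = dl (0 # inorder l @ [a]) + dl (a # inorder r @ [0])"
      by (subst dl_append) simp
    also have "dl (0 # inorder l @ [a]) = dl (0 # inorder l @ [0])"
    proof (cases "inorder l" rule: rev_cases)
      case Nil thus ?thesis by simp
    next
      case (snoc ys y)
      have "y \<in> set_tree l" by (metis snoc set_inorder in_set_conv_decomp)
      hence "a < y" "0 < y" using Node.prems by auto
      thus ?thesis using snoc dl_snoc2[of "0 # ys" y a] dl_snoc2[of "0 # ys" y 0] by simp
    qed
    also have "dl (a # inorder r @ [0]) = dl (0 # inorder r @ [0])"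
      using R ac by simp
    finally show ?thesis using IHl IHr False by (simp add: leaves_Node)
  qed
qed



fun invr :: "nat list \<Rightarrow> nat" where
  "invr [] = 0"
| "invr (a # xs) = length (filter (\<lambda>x. x < a) xs) + invr xs"

lemma inv_word_invr: "inv_word w = invr w"
proof (induction w)
  case Nil thus ?case by (simp add: inv_word_def)
next
  case (Cons a xs)
  let ?A = "{j. j < length xs \<and> xs ! j < a}"
  let ?B = "{(i, j). i < j \<and> j < length xs \<and> xs ! j < xs ! i}"
  have e: "{(i, j). i < j \<and> j < length (a # xs) \<and> (a # xs) ! j < (a # xs) ! i}
     = (\<lambda>j. (0, Suc j)) ` ?A \<union> (\<lambda>(i, j). (Suc i, Suc j)) ` ?B"
  proof (intro set_eqI iffI)
    fix x assume x: "x \<in> {(i, j). i < j \<and> j < length (a # xs) \<and> (a # xs) ! j < (a # xs) ! i}"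
    obtain i j where ij: "x = (i, j)" by (cases x)
    from x ij obtain j' where j': "j = Suc j'" by (cases j) auto
    show "x \<in> (\<lambda>j. (0, Suc j)) ` ?A \<union> (\<lambda>(i, j). (Suc i, Suc j)) ` ?B"
    proof (cases i)
      case 0 thus ?thesis using x ij j' by (auto simp: image_iff)
    next
      case (Suc i') thus ?thesis using x ij j' by (auto simp: image_iff)
    qed
  qed auto
  have finB: "finite ?B" by (rule finite_subset[of _ "{..<length xs} \<times> {..<length xs}"]) auto
  have finA: "finite ?A" by simp
  have "card ((\<lambda>j. (0::nat, Suc j)) ` ?A \<union> (\<lambda>(i, j). (Suc i, Suc j)) ` ?B)
      = card ((\<lambda>j. (0::nat, Suc j)) ` ?A) + card ((\<lambda>(i, j). (Suc i, Suc j)) ` ?B)"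
    using finA finB by (intro card_Un_disjoint) auto
  also have "card ((\<lambda>j. (0::nat, Suc j)) ` ?A) = card ?A"
    by (rule card_image) (auto simp: inj_on_def)
  also have "card ((\<lambda>(i, j). (Suc i, Suc j)) ` ?B) = card ?B"
    by (rule card_image) (auto simp: inj_on_def)
  also have "card ?A = length (filter (\<lambda>x. x < a) xs)" by (simp add: length_filter_conv_card)
  finally show ?case using Cons e by (simp add: inv_word_def)
qed

definition crossc :: "nat set \<Rightarrow> nat set \<Rightarrow> nat" where
  "crossc A B = card {(a, b). a \<in> A \<and> b \<in> B \<and> b < a}"

lemma invr_append: "distinct (xs @ ys) \<Longrightarrow> invr (xs @ ys) = invr xs + invr ys + crossc (set xs) (set ys)"
proof (induction xs)
  case Nil thus ?case by (simp add: crossc_def)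
next
  case (Cons a xs)
  have e: "{(u, b). u \<in> set (a # xs) \<and> b \<in> set ys \<and> b < u}
     = {a} \<times> set (filter (\<lambda>x. x < a) ys) \<union> {(u, b). u \<in> set xs \<and> b \<in> set ys \<and> b < u}" by auto
  have fin: "finite {(u, b). u \<in> set xs \<and> b \<in> set ys \<and> b < u}"
    by (rule finite_subset[of _ "set xs \<times> set ys"]) auto
  have "card ({a} \<times> set (filter (\<lambda>x. x < a) ys) \<union> {(u, b). u \<in> set xs \<and> b \<in> set ys \<and> b < u})
     = card ({a} \<times> set (filter (\<lambda>x. x < a) ys)) + card {(u, b). u \<in> set xs \<and> b \<in> set ys \<and> b < u}"
    using fin Cons.prems by (intro card_Un_disjoint) auto
  also have "card ({a} \<times> set (filter (\<lambda>x. x < a) ys)) = length (filter (\<lambda>x. x < a) ys)"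
  proof -
    have "card (set (filter (\<lambda>x. x < a) ys)) = length (filter (\<lambda>x. x < a) ys)"
      using Cons.prems by (intro distinct_card) simp
    thus ?thesis by (simp add: card_cartesian_product del: set_filter)
  qed
  finally have "crossc (set (a # xs)) (set ys) = length (filter (\<lambda>x. x < a) ys) + crossc (set xs) (set ys)"
    using e by (simp add: crossc_def)
  thus ?case using Cons by simp
qed

definition inv_rel :: "nat tree \<Rightarrow> nat \<Rightarrow> nat \<Rightarrow> bool" where
  "inv_rel t i j = (j < i \<and> (\<exists>p q q'. node_at t (p @ False # q) = Some i \<and>
       (node_at t (p @ True # q') = Some j \<or> node_at t p = Some j)))"

lemma inv_tree_rel: "inv_tree t = card {(i, j). inv_rel t i j}"
  unfolding inv_tree_def inv_rel_def by simp

lemma node_at_set: "node_at t p = Some x \<Longrightarrow> x \<in> set_tree t"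
proof (induction t p rule: node_at.induct)
qed auto

lemma set_node_at: "x \<in> set_tree t \<Longrightarrow> \<exists>p. node_at t p = Some x"
proof (induction t)
  case Leaf thus ?case by simp
next
  case (Node l a r)
  show ?case
  proof -
    { assume "x = a" hence ?case by (intro exI[of _ "[]"]) simp }
    moreover
    { assume "x \<in> set_tree l" then obtain p where "node_at l p = Some x" using Node by blast
      hence ?case by (intro exI[of _ "False # p"]) simp }
    moreover
    { assume "x \<in> set_tree r" then obtain p where "node_at r p = Some x" using Node by blast
      hence ?case by (intro exI[of _ "True # p"]) simp }
    ultimately show ?case using Node.prems by auto
  qed
qed

lemma inv_relI:
  assumes "j < i" "node_at t (p @ False # q) = Some i"
    "node_at t (p @ True # q') = Some j \<or> node_at t p = Some j"
  shows "inv_rel t i j"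
  unfolding inv_rel_def
  apply (rule conjI, rule assms(1))
  apply (rule exI[of _ p], rule exI[of _ q], rule exI[of _ q'])
  using assms(2,3) by (rule conjI)

lemma inv_relE:
  assumes "inv_rel t i j"
  obtains p q q' where "j < i" "node_at t (p @ False # q) = Some i"
    "node_at t (p @ True # q') = Some j \<or> node_at t p = Some j"
  using assms unfolding inv_rel_def by (elim conjE exE) (rule that)

lemma bw1:
  assumes h: "j < i" "i \<in> set_tree l" "j \<in> set_tree r \<or> j = m"
  shows "inv_rel (Node l m r) i j"
proof -
  from set_node_at[OF h(2)] obtain q where q: "node_at l q = Some i" ..
  show ?thesis
  proof (cases "j = m")
    case True
    have A: "node_at (Node l m r) ([] @ False # q) = Some i" and B: "node_at (Node l m r) [] = Some j"
      using q True by simp_all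
    show ?thesis by (rule inv_relI[OF h(1) A disjI2[OF B]])
  next
    case False
    hence "j \<in> set_tree r" using h(3) by simp
    from set_node_at[OF this] obtain q' where q': "node_at r q' = Some j" ..
    have A: "node_at (Node l m r) ([] @ False # q) = Some i" and B: "node_at (Node l m r) ([] @ True # q') = Some j"
      using q q' by simp_all
    show ?thesis by (rule inv_relI[OF h(1) A disjI1[OF B]])
  qed
qed

lemma bw2:
  assumes "inv_rel l i j" shows "inv_rel (Node l m r) i j"
proof -
  from assms obtain p q q' where "j < i" "node_at l (p @ False # q) = Some i"
    "node_at l (p @ True # q') = Some j \<or> node_at l p = Some j" by (rule inv_relE)
  hence "j < i" "node_at (Node l m r) ((False # p) @ False # q) = Some i"
    "node_at (Node l m r) ((False # p) @ True # q') = Some j \<or> node_at (Node l m r) (False # p) = Some j"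
    by simp_all
  thus ?thesis by (rule inv_relI)
qed

lemma bw3:
  assumes "inv_rel r i j" shows "inv_rel (Node l m r) i j"
proof -
  from assms obtain p q q' where "j < i" "node_at r (p @ False # q) = Some i"
    "node_at r (p @ True # q') = Some j \<or> node_at r p = Some j" by (rule inv_relE)
  hence "j < i" "node_at (Node l m r) ((True # p) @ False # q) = Some i"
    "node_at (Node l m r) ((True # p) @ True # q') = Some j \<or> node_at (Node l m r) (True # p) = Some j"
    by simp_all
  thus ?thesis by (rule inv_relI)
qed
lemma inv_rel_Node:
  "inv_rel (Node l m r) i j \<longleftrightarrow>
     (j < i \<and> i \<in> set_tree l \<and> (j \<in> set_tree r \<or> j = m)) \<or> inv_rel l i j \<or> inv_rel r i j"
proof
  assume "inv_rel (Node l m r) i j"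
  then obtain p q q' where ji: "j < i" and h: "node_at (Node l m r) (p @ False # q) = Some i"
    and h2: "node_at (Node l m r) (p @ True # q') = Some j \<or> node_at (Node l m r) p = Some j"
    by (rule inv_relE)
  show "(j < i \<and> i \<in> set_tree l \<and> (j \<in> set_tree r \<or> j = m)) \<or> inv_rel l i j \<or> inv_rel r i j"
  proof (cases p)
    case Nil
    hence "node_at l q = Some i" "node_at r q' = Some j \<or> j = m" using h h2 by auto
    hence "i \<in> set_tree l" "j \<in> set_tree r \<or> j = m" by (auto dest: node_at_set)
    thus ?thesis using ji by blast
  next
    case (Cons c p')
    show ?thesis
    proof (cases c)
      case True
      hence "node_at r (p' @ False # q) = Some i" "node_at r (p' @ True # q') = Some j \<or> node_at r p' = Some j"
        using h h2 Cons by simp_all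
      hence "inv_rel r i j" using ji by (intro inv_relI)
      thus ?thesis by blast
    next
      case False
      hence "node_at l (p' @ False # q) = Some i" "node_at l (p' @ True # q') = Some j \<or> node_at l p' = Some j"
        using h h2 Cons by simp_all
      hence "inv_rel l i j" using ji by (intro inv_relI)
      thus ?thesis by blast
    qed
  qed
next
  assume "(j < i \<and> i \<in> set_tree l \<and> (j \<in> set_tree r \<or> j = m)) \<or> inv_rel l i j \<or> inv_rel r i j"
  thus "inv_rel (Node l m r) i j" using bw1 bw2 bw3 by metis
qed

lemma inv_rel_set: "inv_rel t i j \<Longrightarrow> i \<in> set_tree t \<and> j \<in> set_tree t"
  by (erule inv_relE) (auto dest: node_at_set)

lemma fin_rel: "finite {(i, j). inv_rel t i j}"
  by (rule finite_subset[of _ "set_tree t \<times> set_tree t"]) (auto dest: inv_rel_set)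

lemma inv_tree_invr:
  "inc_tree t \<Longrightarrow> distinct (inorder t) \<Longrightarrow> inv_tree t = invr (inorder t)"
proof (induction t)
  case Leaf thus ?case by (simp add: inv_tree_rel inv_rel_def)
next
  case (Node l m r)
  let ?S0 = "{(i, j). i \<in> set_tree l \<and> j \<in> set_tree (Node Leaf m r) \<and> j < i}"
  have dl: "distinct (inorder l)" "distinct (inorder r)" using Node.prems by auto
  have IH: "inv_tree l = invr (inorder l)" "inv_tree r = invr (inorder r)" using Node dl by auto
  have e: "{(i, j). inv_rel (Node l m r) i j} = ?S0 \<union> {(i, j). inv_rel l i j} \<union> {(i, j). inv_rel r i j}"
    by (auto simp: inv_rel_Node)
  have fin0: "finite ?S0" by (rule finite_subset[of _ "set_tree l \<times> set_tree (Node Leaf m r)"]) auto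
  have disj: "set_tree l \<inter> set_tree r = {}" "m \<notin> set_tree l" "m \<notin> set_tree r"
    using Node.prems by auto
  have "card (?S0 \<union> {(i, j). inv_rel l i j} \<union> {(i, j). inv_rel r i j})
      = card (?S0 \<union> {(i, j). inv_rel l i j}) + card {(i, j). inv_rel r i j}"
    using fin0 fin_rel disj by (intro card_Un_disjoint) (auto dest: inv_rel_set)
  also have "card (?S0 \<union> {(i, j). inv_rel l i j}) = card ?S0 + card {(i, j). inv_rel l i j}"
    using fin0 fin_rel disj by (intro card_Un_disjoint) (auto dest: inv_rel_set)
  finally have c: "inv_tree (Node l m r) = card ?S0 + inv_tree l + inv_tree r"
    using e by (simp add: inv_tree_rel)
  have "invr (inorder (Node l m r)) = invr (inorder l) + invr (m # inorder r)
          + crossc (set (inorder l)) (set (m # inorder r))"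
    using Node.prems by (simp add: invr_append del: invr.simps)
  moreover have "invr (m # inorder r) = invr (inorder r)"
  proof -
    have mr: "\<forall>x\<in>set_tree r. m < x" using Node.prems(1) by simp
    have "filter (\<lambda>x. x < m) (inorder r) = []" unfolding filter_empty_conv
    proof
      fix x assume "x \<in> set (inorder r)"
      thus "\<not> x < m" using mr by auto
    qed
    thus ?thesis by simp
  qed
  moreover have "crossc (set (inorder l)) (set (m # inorder r)) = card ?S0"
    unfolding crossc_def by (simp add: Un_commute insert_commute)
  ultimately show ?case using c IH by simp
qed

declare psi.simps(2)[simp del]

lemma main_bij:
  assumes AT: "\<And>w. A w \<Longrightarrow> AT (psi w)"
    and TA: "\<And>t. inc_tree t \<Longrightarrow> distinct (inorder t) \<Longrightarrow> AT t \<Longrightarrow> A (inorder t)"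
  shows "bij_betw psi {w \<in> perms n. A w} {t. tree_on n t \<and> AT t}"
  unfolding bij_betw_def
proof (intro conjI)
  show "inj_on psi {w \<in> perms n. A w}"
  proof (rule inj_onI)
    fix v w assume v: "v \<in> {w \<in> perms n. A w}" and w: "w \<in> {w \<in> perms n. A w}" and e: "psi v = psi w"
    have "distinct v" "distinct w" using v w unfolding perms_def by simp_all
    hence "inorder (psi v) = v" "inorder (psi w) = w" using psi_props by blast+
    thus "v = w" using e by metis
  qed
  show "psi ` {w \<in> perms n. A w} = {t. tree_on n t \<and> AT t}"
  proof (intro set_eqI iffI)
    fix t assume "t \<in> psi ` {w \<in> perms n. A w}"
    then obtain w where w: "w \<in> perms n" "A w" "t = psi w" by blast
    have d: "distinct w" "set w = {1..n}" using w(1) unfolding perms_def by simp_all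
    have p: "inorder t = w" "inc_tree t" using psi_props[OF d(1)] w(3) by simp_all
    have "length w = n" using distinct_card[OF d(1)] d(2) by simp
    hence "size t = n" using p by (metis length_inorder)
    moreover have "set_tree t = {1..n}" using p d by (metis set_inorder)
    moreover have "AT t" using AT w(2) w(3) by simp
    ultimately show "t \<in> {t. tree_on n t \<and> AT t}" using p unfolding tree_on_def by simp
  next
    fix t assume "t \<in> {t. tree_on n t \<and> AT t}"
    hence t: "inc_tree t" "size t = n" "set_tree t = {1..n}" "AT t" unfolding tree_on_def by simp_all
    have "card (set (inorder t)) = size (inorder t)" using t(2,3) by simp
    hence d: "distinct (inorder t)" by (rule card_distinct)
    have "inorder t \<in> perms n" using d t(3) unfolding perms_def by simp
    moreover have "A (inorder t)" using TA t(1) d t(4) by blast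
    moreover have "psi (inorder t) = t" using psi_inorder t(1) d by blast
    ultimately have "psi (inorder t) \<in> psi ` {w \<in> perms n. A w}" by blast
    thus "t \<in> psi ` {w \<in> perms n. A w}" using \<open>psi (inorder t) = t\<close> by simp
  qed
qed

theorem proposition6p4:
  fixes n :: nat
  shows "bij_betw psi {w \<in> perms n. andreI w} {t. tree_on n t \<and> andreI_tree t}
       \<and> bij_betw psi {w \<in> perms n. andreII w} {t. tree_on n t \<and> andreII_tree t}
       \<and> (\<forall>w \<in> perms n. andreI w \<or> andreII w \<longrightarrow>
             leaves (psi w) = des w \<and> inv_tree (psi w) = inv_word w)"
proof (intro conjI ballI impI)
  show "bij_betw psi {w \<in> perms n. andreI w} {t. tree_on n t \<and> andreI_tree t}"
    using main_bij[of andreI andreI_tree n] andreI_tree_psi andreI_inorder by blast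
  show "bij_betw psi {w \<in> perms n. andreII w} {t. tree_on n t \<and> andreII_tree t}"
    using main_bij[of andreII andreII_tree n] andreII_tree_psi andreII_inorder by blast
next
  fix w assume w: "w \<in> perms n" "andreI w \<or> andreII w"
  have d: "distinct w" "set w = {1..n}" using w(1) unfolding perms_def by simp_all
  have p: "inorder (psi w) = w" "inc_tree (psi w)" using psi_props[OF d(1)] by simp_all
  have r: "rne (psi w)" using w(2) rneI rneII andreI_tree_psi andreII_tree_psi by blast
  have s: "set_tree (psi w) = {1..n}" using p(1) d(2) by (metis set_inorder)
  have pos: "\<forall>x\<in>set_tree (psi w). 0 < x" unfolding s by simp
  have "leaves (psi w) = dl (0 # inorder (psi w) @ [0])" by (rule leaves_dl[OF p(2) r pos])
  thus "leaves (psi w) = des w" using p(1) by (simp add: des_dl)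
  have "inv_tree (psi w) = invr (inorder (psi w))" using inv_tree_invr[OF p(2)] p(1) d(1) by simp
  thus "inv_tree (psi w) = inv_word w" using p(1) by (simp add: inv_word_invr)
qed

end
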